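(* Let $\mathbf P=(P,\leq,{}',0,1)$ be an orthogonal lub-complete poset and $\rightarrow\in\{\rightarrow_C,\rightarrow_K,\rightarrow_N,\rightarrow_S,\rightarrow_D\}$. Then the following conditions are equivalent: (i) (MPO) $x\leq y$ and $x\rightarrow y\leq u\rightarrow v$ imply $u\leq v$, for all $x,y,u,v\in P$. (ii) (OP) $x\leq y$ if and only if $x\rightarrow y=1$, for all $x,y\in P$.
   Context: $(P,\leq,{}',0,1)$ is a bounded poset with an antitone involution ${}'$; orthogonal means $x\leq y'$ implies $x\vee y$ exists; lub-complete means for every lower bound $x$ of a finite subset $M$ there is a maximal lower bound of $M$ above $x$. For $A\subseteq P$, $L(A)$, $U(A)$ are the lower and upper cones, $\mathrm{Max}\,A$, $\mathrm{Min}\,A$ the sets of maximal and minimal elements; joins/meets with sets are elementwise. The implications (operators $P^2\to 2^P$) are: $x\rightarrow_C y:=\mathrm{Min}\,U(x',y)$; $x\rightarrow_K y:=\mathrm{Max}\,L(x',y)\vee \mathrm{Max}\,L(x',y')\vee (x\wedge \mathrm{Min}\,U(x',y))$; $x\rightarrow_N y:=y'\rightarrow_K x'$; $x\rightarrow_S y:=x'\vee \mathrm{Max}\,L(x,y)$; $x\rightarrow_D y:=y'\rightarrow_S x'=y\vee \mathrm{Max}\,L(x',y')$. For sets, $A\leq B$ means $a\leq b$ for all $a\in A,b\in B$; "$=1$" means equal to $\{1\}$. *)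

theory Defs
  imports Main
begin

(* The poset P is the whole carrier type 'a (class order); ' is the function c. *)

definition LC :: "'a::order set \<Rightarrow> 'a set" where
  "LC A = {x. \<forall>a\<in>A. x \<le> a}"

definition UC :: "'a::order set \<Rightarrow> 'a set" where
  "UC A = {x. \<forall>a\<in>A. a \<le> x}"

definition MaxE :: "'a::order set \<Rightarrow> 'a set" where
  "MaxE A = {x\<in>A. \<forall>y\<in>A. x \<le> y \<longrightarrow> y = x}"

definition MinE :: "'a::order set \<Rightarrow> 'a set" where
  "MinE A = {x\<in>A. \<forall>y\<in>A. y \<le> x \<longrightarrow> y = x}"

definition is_join :: "'a::order \<Rightarrow> 'a \<Rightarrow> 'a \<Rightarrow> bool" where
  "is_join x y z \<longleftrightarrow> x \<le> z \<and> y \<le> z \<and> (\<forall>w. x \<le> w \<and> y \<le> w \<longrightarrow> z \<le> w)"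

definition is_meet :: "'a::order \<Rightarrow> 'a \<Rightarrow> 'a \<Rightarrow> bool" where
  "is_meet x y z \<longleftrightarrow> z \<le> x \<and> z \<le> y \<and> (\<forall>w. w \<le> x \<and> w \<le> y \<longrightarrow> w \<le> z)"

definition join_set :: "'a::order set \<Rightarrow> 'a set \<Rightarrow> 'a set" where
  "join_set A B = {z. \<exists>a\<in>A. \<exists>b\<in>B. is_join a b z}"

definition meet_set :: "'a::order set \<Rightarrow> 'a set \<Rightarrow> 'a set" where
  "meet_set A B = {z. \<exists>a\<in>A. \<exists>b\<in>B. is_meet a b z}"

definition set_le :: "'a::order set \<Rightarrow> 'a set \<Rightarrow> bool" where
  "set_le A B \<longleftrightarrow> (\<forall>a\<in>A. \<forall>b\<in>B. a \<le> b)"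

definition bounded_inv_poset :: "('a::order \<Rightarrow> 'a) \<Rightarrow> 'a \<Rightarrow> 'a \<Rightarrow> bool" where
  "bounded_inv_poset c zero one \<longleftrightarrow>
     (\<forall>x. zero \<le> x \<and> x \<le> one) \<and>
     (\<forall>x y. x \<le> y \<longrightarrow> c y \<le> c x) \<and> (\<forall>x. c (c x) = x)"

definition orthogonal :: "('a::order \<Rightarrow> 'a) \<Rightarrow> bool" where
  "orthogonal c \<longleftrightarrow> (\<forall>x y. x \<le> c y \<longrightarrow> (\<exists>z. is_join x y z))"

definition lub_complete :: "'a::order itself \<Rightarrow> bool" where
  "lub_complete _ \<longleftrightarrow> (\<forall>M::'a set. finite M \<longrightarrow> (\<forall>x\<in>LC M. \<exists>y\<in>MaxE (LC M). x \<le> y))"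

definition imp_C :: "('a::order \<Rightarrow> 'a) \<Rightarrow> 'a \<Rightarrow> 'a \<Rightarrow> 'a set" where
  "imp_C c x y = MinE (UC {c x, y})"

definition imp_K :: "('a::order \<Rightarrow> 'a) \<Rightarrow> 'a \<Rightarrow> 'a \<Rightarrow> 'a set" where
  "imp_K c x y = join_set (join_set (MaxE (LC {c x, y})) (MaxE (LC {c x, c y})))
                          (meet_set {x} (MinE (UC {c x, y})))"

definition imp_N :: "('a::order \<Rightarrow> 'a) \<Rightarrow> 'a \<Rightarrow> 'a \<Rightarrow> 'a set" where
  "imp_N c x y = imp_K c (c y) (c x)"

definition imp_S :: "('a::order \<Rightarrow> 'a) \<Rightarrow> 'a \<Rightarrow> 'a \<Rightarrow> 'a set" where
  "imp_S c x y = join_set {c x} (MaxE (LC {x, y}))"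

definition imp_D :: "('a::order \<Rightarrow> 'a) \<Rightarrow> 'a \<Rightarrow> 'a \<Rightarrow> 'a set" where
  "imp_D c x y = imp_S c (c y) (c x)"

datatype imp_kind = ImpC | ImpK | ImpN | ImpS | ImpD

fun imp :: "imp_kind \<Rightarrow> ('a::order \<Rightarrow> 'a) \<Rightarrow> 'a \<Rightarrow> 'a \<Rightarrow> 'a set" where
  "imp ImpC c = imp_C c"
| "imp ImpK c = imp_K c"
| "imp ImpN c = imp_N c"
| "imp ImpS c = imp_S c"
| "imp ImpD c = imp_D c"

end

theory Submission
  imports Defs
begin

lemma join_unique: "is_join a b z \<Longrightarrow> is_join a b z' \<Longrightarrow> z = (z'::'a::order)"
  unfolding is_join_def by (meson order_antisym)

lemma meet_unique: "is_meet a b z \<Longrightarrow> is_meet a b z' \<Longrightarrow> z = (z'::'a::order)"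
  unfolding is_meet_def by (meson order_antisym)

lemma join_comm: "is_join a b z \<Longrightarrow> is_join b a (z::'a::order)"
  unfolding is_join_def by blast

lemma join_triv1: "b \<le> a \<Longrightarrow> is_join a b (a::'a::order)"
  unfolding is_join_def by auto
lemma join_triv2: "a \<le> b \<Longrightarrow> is_join a b (b::'a::order)"
  unfolding is_join_def by auto
lemma meet_triv1: "a \<le> b \<Longrightarrow> is_meet a b (a::'a::order)"
  unfolding is_meet_def by auto
lemma meet_triv2: "b \<le> a \<Longrightarrow> is_meet a b (b::'a::order)"
  unfolding is_meet_def by auto

lemma join_set_single: "is_join a b z \<Longrightarrow> join_set {a} {b} = {z::'a::order}"
  unfolding join_set_def using join_unique by blast
lemma meet_set_single: "is_meet a b z \<Longrightarrow> meet_set {a} {b} = {z::'a::order}"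
  unfolding meet_set_def using meet_unique by blast

lemma join_set_mem: "a \<in> A \<Longrightarrow> b \<in> B \<Longrightarrow> is_join a b z \<Longrightarrow> z \<in> join_set A (B::'a::order set)"
  unfolding join_set_def by blast
lemma meet_set_mem: "a \<in> A \<Longrightarrow> b \<in> B \<Longrightarrow> is_meet a b z \<Longrightarrow> z \<in> meet_set A (B::'a::order set)"
  unfolding meet_set_def by blast

lemma LC2: "LC {a, b} = {w. w \<le> a \<and> w \<le> (b::'a::order)}"
  unfolding LC_def by auto
lemma UC2: "UC {a, b} = {w. a \<le> w \<and> (b::'a::order) \<le> w}"
  unfolding UC_def by auto

lemma MaxE_meet: "is_meet a b m \<Longrightarrow> MaxE (LC {a, b}) = {m::'a::order}"
  unfolding MaxE_def LC2 is_meet_def by (auto intro: order_antisym)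
lemma MinE_join: "is_join a b m \<Longrightarrow> MinE (UC {a, b}) = {m::'a::order}"
  unfolding MinE_def UC2 is_join_def by (auto intro: order_antisym)

context
  fixes c :: "'a::order \<Rightarrow> 'a" and zero one :: 'a
  assumes B: "bounded_inv_poset c zero one"
    and O: "orthogonal c"
    and L: "lub_complete TYPE('a)"
begin

lemma cc: "c (c x) = x" using B unfolding bounded_inv_poset_def by blast
lemma anti: "x \<le> y \<Longrightarrow> c y \<le> c x" using B unfolding bounded_inv_poset_def by blast
lemma anti_iff: "c x \<le> c y \<longleftrightarrow> y \<le> x" by (metis anti cc)
lemma bot: "zero \<le> x" using B unfolding bounded_inv_poset_def by blast
lemma top: "x \<le> one" using B unfolding bounded_inv_poset_def by blast
lemma c_zero: "c zero = one"
proof -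
  have "zero \<le> c one" by (rule bot)
  then have "c (c one) \<le> c zero" by (rule anti)
  then have "one \<le> c zero" by (simp add: cc)
  then show ?thesis using top order_antisym by blast
qed
lemma c_one: "c one = zero" by (metis c_zero cc)

lemma swap: "x \<le> c y \<Longrightarrow> y \<le> c x" by (metis anti cc)

lemma join_ex: "x \<le> c y \<Longrightarrow> \<exists>z. is_join x y z"
  using O unfolding orthogonal_def by blast

lemma meet_of_join: "is_join (c x) (c y) z \<Longrightarrow> is_meet x y (c z)"
  unfolding is_join_def is_meet_def by (metis anti_iff cc)

lemma meet_ex: "c x \<le> y \<Longrightarrow> \<exists>z. is_meet x y z"
proof -
  assume "c x \<le> y"
  then have "c x \<le> c (c y)" by (simp add: cc)
  then obtain z where "is_join (c x) (c y) z" using join_ex by blast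
  then show ?thesis using meet_of_join by blast
qed

lemma max_ex: "\<exists>w. w \<in> MaxE (LC {a, b::'a})"
proof -
  have "zero \<in> LC {a, b}" unfolding LC2 using bot by auto
  moreover have "finite {a, b}" by simp
  moreover have "\<forall>M::'a set. finite M \<longrightarrow> (\<forall>x\<in>LC M. \<exists>y\<in>MaxE (LC M). x \<le> y)"
    using L unfolding lub_complete_def by simp
  ultimately have "\<exists>y\<in>MaxE (LC {a, b}). zero \<le> y" by blast
  then show ?thesis by blast
qed

lemma min_ex: "\<exists>m. m \<in> MinE (UC {a, b::'a})"
proof -
  obtain w where w: "w \<in> MaxE (LC {c a, c b})" using max_ex by blast
  have w1: "w \<le> c a" "w \<le> c b" and w2: "\<And>y. y \<le> c a \<Longrightarrow> y \<le> c b \<Longrightarrow> w \<le> y \<Longrightarrow> y = w"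
    using w unfolding MaxE_def LC2 by auto
  have a1: "a \<le> c w" "b \<le> c w" using w1 swap by blast+
  have a2: "y = c w" if "a \<le> y" "b \<le> y" "y \<le> c w" for y
  proof -
    have "c y \<le> c a" "c y \<le> c b" using that anti by blast+
    moreover have "w \<le> c y" using that swap by blast
    ultimately have "c y = w" using w2 by blast
    then show ?thesis by (metis cc)
  qed
  have "c w \<in> MinE (UC {a, b})"
    unfolding MinE_def UC2 using a1 a2 by blast
  then show ?thesis by blast
qed

lemma min_unique:
  assumes "x \<le> y"
  shows "\<exists>m. MinE (UC {c x, y}) = {m}"
proof -
  obtain m where m: "m \<in> MinE (UC {c x, y})" using min_ex by blast
  have "m2 = m" if m2: "m2 \<in> MinE (UC {c x, y})" for m2
  proof -
    have h1: "c x \<le> m" "y \<le> m" "c x \<le> m2" "y \<le> m2" using m m2 unfolding MinE_def UC2 by auto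
    have "c m \<le> x" using h1 by (metis anti cc)
    then have "c m \<le> c (c m2)" using assms h1 cc by (metis order_trans)
    then obtain j where j: "is_join (c m) (c m2) j" using join_ex by blast
    have "c m2 \<le> x" using h1 by (metis anti cc)
    have jx: "j \<le> x" using j \<open>c m \<le> x\<close> \<open>c m2 \<le> x\<close> unfolding is_join_def by blast
    have jy: "j \<le> c y" using j h1 unfolding is_join_def by (metis anti cc)
    have "c x \<le> c j" using jx anti by blast
    moreover have "y \<le> c j" using jy anti cc by metis
    ultimately have u: "c j \<in> UC {c x, y}" unfolding UC2 by blast
    have "c m \<le> j" "c m2 \<le> j" using j unfolding is_join_def by blast+
    then have "c j \<le> m" "c j \<le> m2" using anti cc by metis+
    then have "c j = m" "c j = m2" using m m2 u unfolding MinE_def by blast+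
    then show ?thesis by simp
  qed
  then show ?thesis using m by blast
qed

lemma S_one: "imp_S c one v = {v}"
  unfolding imp_S_def c_one
  using MaxE_meet[OF meet_triv2[of v one]] top join_set_single[OF join_triv2[OF bot]]
  by metis

lemma S_le: "a \<le> b \<Longrightarrow> \<exists>m. imp_S c a b = {m}"
proof -
  assume "a \<le> b"
  then have "MaxE (LC {a, b}) = {a}" using MaxE_meet meet_triv1 by blast
  moreover obtain z where "is_join (c a) a z" using join_ex[of "c a" a] by blast
  ultimately show ?thesis unfolding imp_S_def using join_set_single by metis
qed

lemma S_ne: "imp_S c u v \<noteq> {}"
proof -
  obtain w where w: "w \<in> MaxE (LC {u, v})" using max_ex by blast
  then have "w \<le> u" unfolding MaxE_def LC2 by auto
  then have "w \<le> c (c u)" by (simp add: cc)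
  then obtain z where "is_join w (c u) z" using join_ex by blast
  then have "z \<in> imp_S c u v" unfolding imp_S_def
    using join_set_mem[OF _ w, of "c u" "{c u}"] join_comm by blast
  then show ?thesis by blast
qed

lemma K_one: "imp_K c one v = {v}"
proof -
  have f1: "MaxE (LC {c one, v}) = {zero}" unfolding c_one by (rule MaxE_meet[OF meet_triv1[OF bot]])
  have f2: "MaxE (LC {c one, c v}) = {zero}" unfolding c_one by (rule MaxE_meet[OF meet_triv1[OF bot]])
  have f3: "MinE (UC {c one, v}) = {v}" unfolding c_one by (rule MinE_join[OF join_triv2[OF bot]])
  have f4: "meet_set {one} {v} = {v}" by (rule meet_set_single[OF meet_triv2[OF top]])
  have f5: "join_set {zero} {zero} = {zero}" by (rule join_set_single[OF join_triv1[OF order_refl]])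
  have f6: "join_set {zero} {v} = {v}" by (rule join_set_single[OF join_triv2[OF bot]])
  show ?thesis unfolding imp_K_def f1 f2 f3 f4 f5 f6 by (rule refl)
qed

lemma N_one: "imp_K c (c v) (c one) = {v}"
proof -
  have f1: "MaxE (LC {c (c v), c one}) = {zero}" unfolding c_one by (rule MaxE_meet[OF meet_triv2[OF bot]])
  have f2: "MaxE (LC {c (c v), c (c one)}) = {v}" unfolding cc by (rule MaxE_meet[OF meet_triv1[OF top]])
  have f3: "MinE (UC {c (c v), c one}) = {v}" unfolding c_one cc by (rule MinE_join[OF join_triv1[OF bot]])
  obtain q where q: "is_meet (c v) v q" using meet_ex[of "c v" v] cc by auto
  have f4: "meet_set {c v} {v} = {q}" by (rule meet_set_single[OF q])
  have f5: "join_set {zero} {v} = {v}" using join_set_single join_triv2 bot by blast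
  have "q \<le> v" using q unfolding is_meet_def by blast
  then have f6: "join_set {v} {q} = {v}" by (rule join_set_single[OF join_triv1])
  show ?thesis unfolding imp_K_def f1 f2 f3 f4 f5 f6 by (rule refl)
qed

lemma K_le:
  assumes "x \<le> y"
  shows "\<exists>s. imp_K c x y = {s}"
proof -
  have "c (c x) \<le> y" unfolding cc by (rule assms)
  then obtain p where p: "is_meet (c x) y p" using meet_ex by blast
  have A: "MaxE (LC {c x, y}) = {p}" by (rule MaxE_meet[OF p])
  have cyx: "c y \<le> c x" using assms by (rule anti)
  have Bq: "MaxE (LC {c x, c y}) = {c y}" by (rule MaxE_meet[OF meet_triv2[OF cyx]])
  obtain m where m: "MinE (UC {c x, y}) = {m}" using min_unique[OF assms] by blast
  then have "m \<in> UC {c x, y}" unfolding MinE_def by blast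
  then have "c x \<le> m" unfolding UC2 by blast
  then obtain q where q: "is_meet x m q" using meet_ex by blast
  have "p \<le> y" "p \<le> c x" using p unfolding is_meet_def by blast+
  then have "p \<le> c (c y)" by (simp add: cc)
  then obtain r where r: "is_join p (c y) r" using join_ex by blast
  have "r \<le> c x" using r \<open>p \<le> c x\<close> cyx unfolding is_join_def by blast
  moreover have "q \<le> x" using q unfolding is_meet_def by blast
  then have "c x \<le> c q" by (rule anti)
  ultimately have "r \<le> c q" by (rule order_trans)
  then obtain s where s: "is_join r q s" using join_ex by blast
  have "imp_K c x y = {s}" unfolding imp_K_def A Bq m
    join_set_single[OF r] meet_set_single[OF q] join_set_single[OF s] by (rule refl)
  then show ?thesis by blast
qed

lemma K_ne: "imp_K c u v \<noteq> {}"
proof -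
  obtain a where a: "a \<in> MaxE (LC {c u, v})" using max_ex by blast
  obtain b where b: "b \<in> MaxE (LC {c u, c v})" using max_ex by blast
  obtain m where m: "m \<in> MinE (UC {c u, v})" using min_ex by blast
  have "a \<le> c b" using a b unfolding MaxE_def LC2 by (auto simp: anti_iff) (metis anti cc order_trans)
  then obtain r where r: "is_join a b r" using join_ex by blast
  have "c u \<le> m" using m unfolding MinE_def UC2 by auto
  then obtain q where q: "is_meet u m q" using meet_ex by blast
  have "r \<le> c u" using r a b unfolding is_join_def MaxE_def LC2 by auto
  moreover have "c u \<le> c q" using q anti unfolding is_meet_def by blast
  ultimately have "r \<le> c q" by (rule order_trans)
  then obtain s where s: "is_join r q s" using join_ex by blast
  have "r \<in> join_set (MaxE (LC {c u, v})) (MaxE (LC {c u, c v}))" using join_set_mem a b r by blast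
  moreover have "q \<in> meet_set {u} (MinE (UC {c u, v}))" using meet_set_mem m q by blast
  ultimately have "s \<in> imp_K c u v" unfolding imp_K_def using join_set_mem s by blast
  then show ?thesis by blast
qed

lemma C_one: "imp_C c one v = {v}"
  unfolding imp_C_def c_one using MinE_join join_triv2 bot by blast

lemma D_one: "imp_S c (c v) (c one) = {v}"
proof -
  have f1: "MaxE (LC {c v, c one}) = {zero}" unfolding c_one by (rule MaxE_meet[OF meet_triv2[OF bot]])
  have f2: "join_set {v} {zero} = {v}" by (rule join_set_single[OF join_triv1[OF bot]])
  show ?thesis unfolding imp_S_def f1 cc f2 by (rule refl)
qed

lemma imp_one: "imp k c one v = {v}"
proof (cases k)
  case ImpC then show ?thesis using C_one by simp
next
  case ImpK then show ?thesis using K_one by simp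
next
  case ImpN then show ?thesis using N_one by (simp add: imp_N_def)
next
  case ImpS then show ?thesis using S_one by simp
next
  case ImpD then show ?thesis using D_one by (simp add: imp_D_def)
qed

lemma imp_le: "x \<le> y \<Longrightarrow> \<exists>m. imp k c x y = {m}"
proof (cases k)
  case ImpC assume "x \<le> y" then show ?thesis using ImpC min_unique by (simp add: imp_C_def)
next
  case ImpK assume "x \<le> y" then show ?thesis using ImpK K_le by simp
next
  case ImpN assume "x \<le> y" then have "c y \<le> c x" by (rule anti)
  then show ?thesis using ImpN K_le by (simp add: imp_N_def)
next
  case ImpS assume "x \<le> y" then show ?thesis using ImpS S_le by simp
next
  case ImpD assume "x \<le> y" then have "c y \<le> c x" by (rule anti)
  then show ?thesis using ImpD S_le by (simp add: imp_D_def)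
qed

lemma imp_ne: "imp k c u v \<noteq> {}"
proof (cases k)
  case ImpC
  obtain m where "m \<in> MinE (UC {c u, v})" using min_ex by blast
  then show ?thesis using ImpC by (auto simp: imp_C_def)
next
  case ImpK then show ?thesis using K_ne by simp
next
  case ImpN then show ?thesis using K_ne by (simp add: imp_N_def)
next
  case ImpS then show ?thesis using S_ne by simp
next
  case ImpD then show ?thesis using S_ne by (simp add: imp_D_def)
qed

end

theorem theorem10:
  fixes c :: "'a::order \<Rightarrow> 'a" and zero one :: 'a and k :: imp_kind
  assumes "bounded_inv_poset c zero one"
    and "orthogonal c"
    and "lub_complete TYPE('a)"
  shows "(\<forall>x y u v. x \<le> y \<and> set_le (imp k c x y) (imp k c u v) \<longrightarrow> u \<le> v)
     \<longleftrightarrow> (\<forall>x y. x \<le> y \<longleftrightarrow> imp k c x y = {one})"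
proof
  assume MPO: "\<forall>x y u v. x \<le> y \<and> set_le (imp k c x y) (imp k c u v) \<longrightarrow> u \<le> v"
  show "\<forall>x y. x \<le> y \<longleftrightarrow> imp k c x y = {one}"
  proof (intro allI iffI)
    fix x y :: 'a
    assume "x \<le> y"
    then obtain m where m: "imp k c x y = {m}" using imp_le[OF assms] by blast
    have "set_le (imp k c x y) (imp k c one m)"
      unfolding m imp_one[OF assms] set_le_def by simp
    then have "one \<le> m" using MPO \<open>x \<le> y\<close> by blast
    then have "m = one" using top[OF assms] order_antisym by blast
    then show "imp k c x y = {one}" using m by simp
  next
    fix x y :: 'a
    assume h: "imp k c x y = {one}"
    have "set_le (imp k c x x) (imp k c x y)"
      unfolding h set_le_def using top[OF assms] by simp
    then show "x \<le> y" using MPO by blast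
  qed
next
  assume OP: "\<forall>x y. x \<le> y \<longleftrightarrow> imp k c x y = {one}"
  show "\<forall>x y u v. x \<le> y \<and> set_le (imp k c x y) (imp k c u v) \<longrightarrow> u \<le> v"
  proof (intro allI impI)
    fix x y u v :: 'a
    assume h: "x \<le> y \<and> set_le (imp k c x y) (imp k c u v)"
    then have "imp k c x y = {one}" using OP by blast
    then have "\<forall>b\<in>imp k c u v. one \<le> b" using h unfolding set_le_def by simp
    then have "\<forall>b\<in>imp k c u v. b = one" using top[OF assms] order_antisym by blast
    moreover have "imp k c u v \<noteq> {}" using imp_ne[OF assms] by blast
    ultimately have "imp k c u v = {one}" by auto
    then show "u \<le> v" using OP by blast
  qed
qed

end
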